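(* Consider the attacked observer with watermark and linear feedback $\kappa(\hat x)=-K\hat x$: $\dot{\hat x}=f(\hat x)+B(-K\hat x+G\xi)-L[C\hat x+D(-K\hat x+G\xi)]+Ly^a$, $\hat y=C\hat x+D(-K\hat x+G\xi)$, with input $\xi$ and output $\hat y$. Let $\beta>0$. If there exist a symmetric negative definite $Q\in\mathbb{R}^{n\times n}$ and $G\in\mathbb{R}^{m\times m}$ such that for all $x\in\mathbb{R}^n$ $$\begin{bmatrix}\mathcal{M}_{11} & Q(B-LD)G+(C-DK)^\top DG\\ \big(Q(B-LD)G+(C-DK)^\top DG\big)^\top & G^\top D^\top DG-\beta I_m\end{bmatrix}\succeq0,$$ where $\mathcal{M}_{11}=[A_x-BK-L(C-DK)]^\top Q+Q[A_x-BK-L(C-DK)]+(C-DK)^\top(C-DK)$ and $A_x=\frac{\partial f}{\partial x}(x)$, then $[\mathcal{L}^-_{\delta 2}]^\xi_{\hat y}(G)\ge\beta$.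
   Context: $f:\mathbb{R}^n\to\mathbb{R}^n$ continuously differentiable; $B\in\mathbb{R}^{n\times m}$, $C\in\mathbb{R}^{p\times n}$, $D\in\mathbb{R}^{p\times m}$, $K\in\mathbb{R}^{m\times n}$, $L\in\mathbb{R}^{n\times p}$; $y^a$ is an exogenous signal common to the compared trajectories. $\mathcal{L}^-_{\delta2}$ gain from $\xi$ to $\hat y$: with $\|h\|_{\mathcal{L}_2}:=\int\|h(t)\|^2dt$ (no square root) and truncation $(h)_\tau$, it is $\sup\gamma^-$ over $\gamma^->0$ for which some $\alpha^-\in\mathcal{K}$ gives $\|(\hat Y_1-\hat Y_2)_\tau\|_{\mathcal{L}_2}\ge\gamma^-\|(\xi_1-\xi_2)_\tau\|_{\mathcal{L}_2}-\alpha^-(\|\hat x_1-\hat x_2\|)$ for all $\tau\ge0$, initial states and inputs. *)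

theory Defs
  imports "HOL-Analysis.Analysis"
begin

definition classK :: "(real \<Rightarrow> real) \<Rightarrow> bool" where
  "classK \<alpha> \<longleftrightarrow> continuous_on {0..} \<alpha> \<and> \<alpha> 0 = 0 \<and> strict_mono_on {0..} \<alpha>"

text \<open>Squared L2 norm of the truncation (h)_tau (no square root): integral over [0,tau].\<close>
definition trunc_L2 :: "(real \<Rightarrow> real ^ 'k) \<Rightarrow> real \<Rightarrow> real" where
  "trunc_L2 h \<tau> = integral {0..\<tau>} (\<lambda>t. (norm (h t))\<^sup>2)"

definition neg_def :: "real ^ 'n ^ 'n \<Rightarrow> bool" where
  "neg_def Q \<longleftrightarrow> transpose Q = Q \<and> (\<forall>v. v \<noteq> 0 \<longrightarrow> v \<bullet> (Q *v v) < 0)"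

definition psd :: "real ^ 'k ^ 'k \<Rightarrow> bool" where
  "psd M \<longleftrightarrow> transpose M = M \<and> (\<forall>z. 0 \<le> z \<bullet> (M *v z))"

definition block4 :: "real ^ 'a ^ 'a \<Rightarrow> real ^ 'b ^ 'a \<Rightarrow> real ^ 'a ^ 'b \<Rightarrow> real ^ 'b ^ 'b
    \<Rightarrow> real ^ ('a + 'b) ^ ('a + 'b)" where
  "block4 M11 M12 M21 M22 = (\<chi> i j. case (i, j) of
      (Inl a, Inl b) \<Rightarrow> M11 $ a $ b
    | (Inl a, Inr b) \<Rightarrow> M12 $ a $ b
    | (Inr a, Inl b) \<Rightarrow> M21 $ a $ b
    | (Inr a, Inr b) \<Rightarrow> M22 $ a $ b)"

definition obs_out ::
  "real ^ 'n ^ 'p \<Rightarrow> real ^ 'm ^ 'p \<Rightarrow> real ^ 'n ^ 'm \<Rightarrow> real ^ 'm ^ 'm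
   \<Rightarrow> real ^ 'n \<Rightarrow> real ^ 'm \<Rightarrow> real ^ 'p" where
  "obs_out C D K G xh xi = C *v xh + D *v (- (K *v xh) + G *v xi)"

definition obs_traj ::
  "(real ^ 'n \<Rightarrow> real ^ 'n) \<Rightarrow> real ^ 'm ^ 'n \<Rightarrow> real ^ 'n ^ 'p \<Rightarrow> real ^ 'm ^ 'p
   \<Rightarrow> real ^ 'n ^ 'm \<Rightarrow> real ^ 'p ^ 'n \<Rightarrow> real ^ 'm ^ 'm
   \<Rightarrow> (real \<Rightarrow> real ^ 'p) \<Rightarrow> (real \<Rightarrow> real ^ 'm) \<Rightarrow> (real \<Rightarrow> real ^ 'n) \<Rightarrow> bool" where
  "obs_traj f B C D K L G ya xi xh \<longleftrightarrow>
     continuous_on {0..} xi \<and>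
     (\<forall>t\<ge>0. (xh has_vector_derivative
        (f (xh t) + B *v (- (K *v xh t) + G *v xi t)
         - L *v (C *v xh t + D *v (- (K *v xh t) + G *v xi t)) + L *v ya t))
        (at t within {0..}))"

definition lower_gain_set ::
  "(real ^ 'n \<Rightarrow> real ^ 'n) \<Rightarrow> real ^ 'm ^ 'n \<Rightarrow> real ^ 'n ^ 'p \<Rightarrow> real ^ 'm ^ 'p
   \<Rightarrow> real ^ 'n ^ 'm \<Rightarrow> real ^ 'p ^ 'n \<Rightarrow> real ^ 'm ^ 'm \<Rightarrow> real set" where
  "lower_gain_set f B C D K L G = {\<gamma>. \<gamma> > 0 \<and> (\<exists>\<alpha>. classK \<alpha> \<and>
     (\<forall>ya xi1 xi2 xh1 xh2 \<tau>.
        obs_traj f B C D K L G ya xi1 xh1 \<longrightarrow> obs_traj f B C D K L G ya xi2 xh2 \<longrightarrow> \<tau> \<ge> 0 \<longrightarrow>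
        trunc_L2 (\<lambda>t. obs_out C D K G (xh1 t) (xi1 t) - obs_out C D K G (xh2 t) (xi2 t)) \<tau>
          \<ge> \<gamma> * trunc_L2 (\<lambda>t. xi1 t - xi2 t) \<tau> - \<alpha> (norm (xh1 0 - xh2 0))))}"

definition lower_incr_L2_gain ::
  "(real ^ 'n \<Rightarrow> real ^ 'n) \<Rightarrow> real ^ 'm ^ 'n \<Rightarrow> real ^ 'n ^ 'p \<Rightarrow> real ^ 'm ^ 'p
   \<Rightarrow> real ^ 'n ^ 'm \<Rightarrow> real ^ 'p ^ 'n \<Rightarrow> real ^ 'm ^ 'm \<Rightarrow> ereal" where
  "lower_incr_L2_gain f B C D K L G = Sup (ereal ` lower_gain_set f B C D K L G)"

end

theory Submission imports Defs begin

lemma inner_transpose: "inner (x::real^'a) (transpose M *v y) = inner (M *v x) y"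
  by (metis dot_lmul_matrix inner_commute transpose_matrix_vector)

lemma sum_UNIV_plus: "(\<Sum>i\<in>(UNIV::('a::finite+'b::finite) set). g i) = (\<Sum>a\<in>UNIV. g (Inl a)) + (\<Sum>b\<in>UNIV. g (Inr b))"
proof -
  have U: "(UNIV :: ('a+'b) set) = UNIV <+> UNIV" by simp
  show ?thesis by (subst U, subst sum.Plus) (simp_all add: o_def)
qed

lemma block_quad:
  fixes e :: "real^'a" and d :: "real^'b"
  defines "z \<equiv> (\<chi> i. case i of Inl a \<Rightarrow> e $ a | Inr b \<Rightarrow> d $ b) :: real^('a+'b)"
  shows "z \<bullet> (block4 M11 M12 M21 M22 *v z) = e \<bullet> (M11 *v e) + e \<bullet> (M12 *v d) + d \<bullet> (M21 *v e) + d \<bullet> (M22 *v d)"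
  unfolding inner_vec_def matrix_vector_mult_def block4_def z_def
  by (simp add: sum_UNIV_plus sum.distrib sum_distrib_left algebra_simps)

lemma pointwise_alg:
  fixes A0 :: "real^'n^'n" and B :: "real ^ 'm ^ 'n" and C :: "real ^ 'n ^ 'p" and D :: "real ^ 'm ^ 'p"
    and K :: "real ^ 'n ^ 'm" and L :: "real ^ 'p ^ 'n" and Q :: "real ^ 'n ^ 'n" and G :: "real ^ 'm ^ 'm"
    and e :: "real^'n" and d :: "real^'m"
  assumes Qs: "transpose Q = Q"
   and P: "psd (block4
        (transpose (A0 - B ** K - L ** (C - D ** K)) ** Q
           + Q ** (A0 - B ** K - L ** (C - D ** K))
           + transpose (C - D ** K) ** (C - D ** K))
        (Q ** (B - L ** D) ** G + transpose (C - D ** K) ** D ** G)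
        (transpose (Q ** (B - L ** D) ** G + transpose (C - D ** K) ** D ** G))
        (transpose G ** transpose D ** D ** G - \<beta> *\<^sub>R mat 1))"
  shows "0 \<le> 2 * (e \<bullet> (Q *v ((A0 - B ** K - L ** (C - D ** K)) *v e + ((B - L ** D) ** G) *v d)))
          + (norm ((C - D ** K) *v e + (D ** G) *v d))\<^sup>2 - \<beta> * (norm d)\<^sup>2"
proof -
  define A where "A = A0 - B ** K - L ** (C - D ** K)"
  define N where "N = C - D ** K"
  define P1 where "P1 = Q ** (B - L ** D) ** G"
  define P2 where "P2 = transpose N ** D ** G"
  define z :: "real^('n+'m)" where "z = (\<chi> i. case i of Inl a \<Rightarrow> e $ a | Inr b \<Rightarrow> d $ b)"
  have "0 \<le> z \<bullet> (block4 (transpose A ** Q + Q ** A + transpose N ** N) (P1 + P2) (transpose (P1 + P2))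
          (transpose G ** transpose D ** D ** G - \<beta> *\<^sub>R mat 1) *v z)"
    using P unfolding psd_def A_def N_def P1_def P2_def by blast
  also have "\<dots> = e \<bullet> ((transpose A ** Q + Q ** A + transpose N ** N) *v e) + e \<bullet> ((P1 + P2) *v d)
     + d \<bullet> (transpose (P1 + P2) *v e) + d \<bullet> ((transpose G ** transpose D ** D ** G - \<beta> *\<^sub>R mat 1) *v d)"
    unfolding z_def by (rule block_quad)
  also have "e \<bullet> ((transpose A ** Q + Q ** A + transpose N ** N) *v e) = 2 * (e \<bullet> (Q *v (A *v e))) + (norm (N *v e))\<^sup>2"
  proof -
    have "e \<bullet> ((transpose A ** Q) *v e) = e \<bullet> (Q *v (A *v e))"
      by (metis inner_transpose inner_commute matrix_vector_mul_assoc Qs)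
    moreover have "e \<bullet> ((transpose N ** N) *v e) = (norm (N *v e))\<^sup>2"
      by (metis inner_transpose matrix_vector_mul_assoc power2_norm_eq_inner)
    ultimately show ?thesis
      by (simp add: matrix_vector_mult_add_rdistrib inner_add_right matrix_vector_mul_assoc[symmetric])
  qed
  also have "d \<bullet> (transpose (P1 + P2) *v e) = e \<bullet> ((P1 + P2) *v d)"
    by (metis inner_transpose inner_commute)
  also have "e \<bullet> ((P1 + P2) *v d) = e \<bullet> (Q *v (((B - L ** D) ** G) *v d)) + (N *v e) \<bullet> ((D ** G) *v d)"
    unfolding P1_def P2_def
    by (simp add: matrix_vector_mult_add_rdistrib inner_add_right inner_transpose matrix_vector_mul_assoc[symmetric] del: transpose_matrix_vector)
  also have "d \<bullet> ((transpose G ** transpose D ** D ** G - \<beta> *\<^sub>R mat 1) *v d) = (norm ((D ** G) *v d))\<^sup>2 - \<beta> * (norm d)\<^sup>2"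
  proof -
    have "d \<bullet> ((transpose G ** transpose D ** D ** G) *v d) = (norm ((D ** G) *v d))\<^sup>2"
      by (metis inner_transpose matrix_vector_mul_assoc power2_norm_eq_inner matrix_transpose_mul)
    moreover have "(\<beta> *\<^sub>R mat 1 :: real^'m^'m) *v d = \<beta> *\<^sub>R d"
      by (simp add: vec_eq_iff matrix_vector_mult_def mat_def if_distrib[where f="\<lambda>x. \<beta> * x"] if_distrib[where f="\<lambda>x. x * _"] cong: if_cong)
    ultimately show ?thesis
      by (simp add: matrix_vector_mult_diff_rdistrib inner_diff_right power2_norm_eq_inner)
  qed
  finally have H: "0 \<le> 2 * (e \<bullet> (Q *v (A *v e))) + (norm (N *v e))\<^sup>2 + 
      (e \<bullet> (Q *v (((B - L ** D) ** G) *v d)) + (N *v e) \<bullet> ((D ** G) *v d)) +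
      (e \<bullet> (Q *v (((B - L ** D) ** G) *v d)) + (N *v e) \<bullet> ((D ** G) *v d)) +
      ((norm ((D ** G) *v d))\<^sup>2 - \<beta> * (norm d)\<^sup>2)" .
  have E: "(norm (N *v e + (D ** G) *v d))\<^sup>2 = (norm (N *v e))\<^sup>2 + 2 * ((N *v e) \<bullet> ((D ** G) *v d)) + (norm ((D ** G) *v d))\<^sup>2"
    by (simp add: power2_norm_eq_inner inner_add_left inner_add_right inner_commute)
  have AN: "A0 - B ** K - L ** N = A" by (simp add: A_def N_def)
  show ?thesis
    unfolding N_def[symmetric] AN E
    using H by (simp add: matrix_vector_right_distrib inner_add_right algebra_simps)
qed

lemma pointwise_full:
  fixes f :: "real ^ 'n \<Rightarrow> real ^ 'n"
    and Df :: "real ^ 'n \<Rightarrow> real ^ 'n ^ 'n"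
    and B :: "real ^ 'm ^ 'n" and C :: "real ^ 'n ^ 'p" and D :: "real ^ 'm ^ 'p"
    and K :: "real ^ 'n ^ 'm" and L :: "real ^ 'p ^ 'n"
    and Q :: "real ^ 'n ^ 'n" and G :: "real ^ 'm ^ 'm" and \<beta> :: real
  assumes f_deriv: "\<And>x. (f has_derivative (\<lambda>h. Df x *v h)) (at x)"
    and Qs: "transpose Q = Q"
    and LMI: "\<And>x. psd (block4
        (transpose (Df x - B ** K - L ** (C - D ** K)) ** Q
           + Q ** (Df x - B ** K - L ** (C - D ** K))
           + transpose (C - D ** K) ** (C - D ** K))
        (Q ** (B - L ** D) ** G + transpose (C - D ** K) ** D ** G)
        (transpose (Q ** (B - L ** D) ** G + transpose (C - D ** K) ** D ** G))
        (transpose G ** transpose D ** D ** G - \<beta> *\<^sub>R mat 1))"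
  shows "0 \<le> 2 * ((x1 - x2) \<bullet> (Q *v (
      (f x1 + B *v (- (K *v x1) + G *v u1) - L *v (C *v x1 + D *v (- (K *v x1) + G *v u1)) + L *v y)
    - (f x2 + B *v (- (K *v x2) + G *v u2) - L *v (C *v x2 + D *v (- (K *v x2) + G *v u2)) + L *v y))))
    + (norm (obs_out C D K G x1 u1 - obs_out C D K G x2 u2))\<^sup>2 - \<beta> * (norm (u1 - u2))\<^sup>2"
proof -
  define e where "e = x1 - x2"
  define d where "d = u1 - u2"
  define \<phi> where "\<phi> s = e \<bullet> (Q *v f (x2 + s *\<^sub>R e))" for s :: real
  have der: "DERIV \<phi> s :> e \<bullet> (Q *v (Df (x2 + s *\<^sub>R e) *v e))" for s
  proof -
    have g: "((\<lambda>s. x2 + s *\<^sub>R e) has_derivative (\<lambda>h. h *\<^sub>R e)) (at s)"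
      by (auto intro!: derivative_eq_intros)
    have fg: "((\<lambda>s. f (x2 + s *\<^sub>R e)) has_derivative (\<lambda>h. Df (x2 + s *\<^sub>R e) *v (h *\<^sub>R e))) (at s)"
      using diff_chain_at[OF g f_deriv] by (simp add: o_def)
    have "(\<phi> has_derivative (\<lambda>h. e \<bullet> (Q *v (Df (x2 + s *\<^sub>R e) *v (h *\<^sub>R e))))) (at s)"
      unfolding \<phi>_def
      by (rule bounded_linear.has_derivative[OF bounded_linear_inner_right,
            OF bounded_linear.has_derivative[OF matrix_vector_mul_bounded_linear fg]])
    moreover have "(\<lambda>h. e \<bullet> (Q *v (Df (x2 + s *\<^sub>R e) *v (h *\<^sub>R e)))) = (\<lambda>h. (e \<bullet> (Q *v (Df (x2 + s *\<^sub>R e) *v e))) * h)"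
      by (auto simp: matrix_vector_mult_scaleR mult.commute)
    ultimately show ?thesis
      by (simp add: has_field_derivative_def)
  qed
  obtain z where "0 < z" "z < 1" and z: "\<phi> 1 - \<phi> 0 = (1 - 0) * (e \<bullet> (Q *v (Df (x2 + z *\<^sub>R e) *v e)))"
    using MVT2[of 0 1 \<phi>, OF _ der] by auto
  have mv: "e \<bullet> (Q *v (f x1 - f x2)) = e \<bullet> (Q *v (Df (x2 + z *\<^sub>R e) *v e))"
    using z unfolding \<phi>_def e_def by (simp add: matrix_vector_mult_diff_distrib inner_diff_right)
  have A: "0 \<le> 2 * (e \<bullet> (Q *v ((Df (x2 + z *\<^sub>R e) - B ** K - L ** (C - D ** K)) *v e + ((B - L ** D) ** G) *v d)))
          + (norm ((C - D ** K) *v e + (D ** G) *v d))\<^sup>2 - \<beta> * (norm d)\<^sup>2"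
    by (rule pointwise_alg[OF Qs LMI])
  have F: "(f x1 + B *v (- (K *v x1) + G *v u1) - L *v (C *v x1 + D *v (- (K *v x1) + G *v u1)) + L *v y)
    - (f x2 + B *v (- (K *v x2) + G *v u2) - L *v (C *v x2 + D *v (- (K *v x2) + G *v u2)) + L *v y)
    = (f x1 - f x2) + (((B - L ** D) ** G) *v d - (B ** K) *v e - (L ** (C - D ** K)) *v e)"
    unfolding e_def d_def
    by (simp add: algebra_simps matrix_vector_mul_assoc[symmetric])
  have O: "obs_out C D K G x1 u1 - obs_out C D K G x2 u2 = (C - D ** K) *v e + (D ** G) *v d"
    unfolding e_def d_def obs_out_def
    by (simp add: algebra_simps matrix_vector_mul_assoc[symmetric])
  have "e \<bullet> (Q *v ((f x1 - f x2) + (((B - L ** D) ** G) *v d - (B ** K) *v e - (L ** (C - D ** K)) *v e)))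
     = e \<bullet> (Q *v ((Df (x2 + z *\<^sub>R e) - B ** K - L ** (C - D ** K)) *v e + ((B - L ** D) ** G) *v d))"
    using mv by (simp add: matrix_vector_right_distrib inner_add_right matrix_vector_mult_diff_rdistrib
         matrix_vector_mult_add_rdistrib matrix_vector_mult_diff_distrib inner_diff_right)
  then show ?thesis using A unfolding F O e_def[symmetric] d_def[symmetric] by simp
qed

theorem proposition4:
  fixes f :: "real ^ 'n \<Rightarrow> real ^ 'n"
    and Df :: "real ^ 'n \<Rightarrow> real ^ 'n ^ 'n"
    and B :: "real ^ 'm ^ 'n" and C :: "real ^ 'n ^ 'p" and D :: "real ^ 'm ^ 'p"
    and K :: "real ^ 'n ^ 'm" and L :: "real ^ 'p ^ 'n"
    and Q :: "real ^ 'n ^ 'n" and G :: "real ^ 'm ^ 'm" and \<beta> :: real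
  assumes f_deriv: "\<And>x. (f has_derivative (\<lambda>h. Df x *v h)) (at x)"
    and Df_cont: "continuous_on UNIV Df"
    and beta_pos: "\<beta> > 0"
    and Q_nd: "neg_def Q"
    and LMI: "\<And>x. psd (block4
        (transpose (Df x - B ** K - L ** (C - D ** K)) ** Q
           + Q ** (Df x - B ** K - L ** (C - D ** K))
           + transpose (C - D ** K) ** (C - D ** K))
        (Q ** (B - L ** D) ** G + transpose (C - D ** K) ** D ** G)
        (transpose (Q ** (B - L ** D) ** G + transpose (C - D ** K) ** D ** G))
        (transpose G ** transpose D ** D ** G - \<beta> *\<^sub>R mat 1))"
  shows "lower_incr_L2_gain f B C D K L G \<ge> ereal \<beta>"
proof -
  have Qs: "transpose Q = Q" using Q_nd by (simp add: neg_def_def)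
  have Qneg: "v \<bullet> (Q *v v) \<le> 0" for v
    using Q_nd unfolding neg_def_def by (cases "v = 0") (auto intro: less_imp_le)
  obtain c where c: "c > 0" "\<And>v. norm (Q *v v) \<le> norm v * c"
    using bounded_linear.pos_bounded[OF matrix_vector_mul_bounded_linear[of Q]] by blast
  have Qlow: "v \<bullet> (Q *v v) \<ge> - (c * (norm v)\<^sup>2)" for v
  proof -
    have "\<bar>v \<bullet> (Q *v v)\<bar> \<le> norm v * norm (Q *v v)" by (rule Cauchy_Schwarz_ineq2)
    also have "\<dots> \<le> norm v * (norm v * c)" using c(2)[of v] by (simp add: mult_left_mono)
    finally show ?thesis by (simp add: power2_eq_square algebra_simps)
  qed
  define \<alpha> where "\<alpha> r = c * r\<^sup>2" for r :: real
  have classK: "classK \<alpha>"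
    unfolding classK_def \<alpha>_def
    by (auto intro!: continuous_intros strict_mono_onI simp: power_strict_mono c(1))
  have "\<beta> \<in> lower_gain_set f B C D K L G"
    unfolding lower_gain_set_def
  proof (intro CollectI conjI exI[of _ \<alpha>] allI impI classK beta_pos)
    fix ya xi1 xi2 xh1 xh2 and \<tau> :: real
    assume T1: "obs_traj f B C D K L G ya xi1 xh1" and T2: "obs_traj f B C D K L G ya xi2 xh2"
      and tau: "0 \<le> \<tau>"
    define F where "F xi xh t = f (xh t) + B *v (- (K *v xh t) + G *v xi t)
         - L *v (C *v xh t + D *v (- (K *v xh t) + G *v xi t)) + L *v ya t" for xi xh t
    have d1: "(xh1 has_vector_derivative F xi1 xh1 t) (at t within {0..})" if "t \<ge> 0" for t
      using T1 that unfolding obs_traj_def F_def by blast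
    have d2: "(xh2 has_vector_derivative F xi2 xh2 t) (at t within {0..})" if "t \<ge> 0" for t
      using T2 that unfolding obs_traj_def F_def by blast
    have cxi1: "continuous_on {0..} xi1" and cxi2: "continuous_on {0..} xi2"
      using T1 T2 unfolding obs_traj_def by auto
    have cxh1: "continuous_on {0..} xh1"
      using d1 by (auto simp: continuous_on_eq_continuous_within intro: has_vector_derivative_continuous)
    have cxh2: "continuous_on {0..} xh2"
      using d2 by (auto simp: continuous_on_eq_continuous_within intro: has_vector_derivative_continuous)
    define e where "e t = xh1 t - xh2 t" for t
    define W where "W t = e t \<bullet> (Q *v e t)" for t
    define W' where "W' t = 2 * (e t \<bullet> (Q *v (F xi1 xh1 t - F xi2 xh2 t)))" for t
    define g where "g t = (norm (obs_out C D K G (xh1 t) (xi1 t) - obs_out C D K G (xh2 t) (xi2 t)))\<^sup>2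
        - \<beta> * (norm (xi1 t - xi2 t))\<^sup>2" for t
    have dW: "(W has_vector_derivative W' t) (at t within {0..\<tau>})" if "t \<in> {0..\<tau>}" for t
    proof -
      have de: "(e has_vector_derivative (F xi1 xh1 t - F xi2 xh2 t)) (at t within {0..})"
        unfolding e_def using d1 d2 that by (auto intro!: has_vector_derivative_diff)
      have dQe: "((\<lambda>t. Q *v e t) has_vector_derivative Q *v (F xi1 xh1 t - F xi2 xh2 t)) (at t within {0..})"
        by (rule bounded_linear.has_vector_derivative[OF matrix_vector_mul_bounded_linear de])
      have "(W has_vector_derivative (e t \<bullet> (Q *v (F xi1 xh1 t - F xi2 xh2 t)) + (F xi1 xh1 t - F xi2 xh2 t) \<bullet> (Q *v e t))) (at t within {0..})"
        unfolding W_def by (rule bounded_bilinear.has_vector_derivative[OF bounded_bilinear_inner de dQe])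
      moreover have "(F xi1 xh1 t - F xi2 xh2 t) \<bullet> (Q *v e t) = e t \<bullet> (Q *v (F xi1 xh1 t - F xi2 xh2 t))"
        by (metis inner_transpose inner_commute Qs)
      ultimately have "(W has_vector_derivative W' t) (at t within {0..})"
        unfolding W'_def by simp
      then show ?thesis by (rule has_vector_derivative_within_subset) auto
    qed
    have intW: "(W' has_integral (W \<tau> - W 0)) {0..\<tau>}"
      by (rule fundamental_theorem_of_calculus[OF tau dW])
    have pw: "0 \<le> W' t + g t" for t
      unfolding W'_def g_def e_def F_def
      using pointwise_full[OF f_deriv Qs LMI, of "xh1 t" "xh2 t" "xi1 t" "ya t" "xi2 t"]
      by simp
    have cont_out: "continuous_on {0..\<tau>} (\<lambda>t. obs_out C D K G (xh1 t) (xi1 t) - obs_out C D K G (xh2 t) (xi2 t))"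
      unfolding obs_out_def
      using continuous_on_subset[OF cxh1, of "{0..\<tau>}"] continuous_on_subset[OF cxh2, of "{0..\<tau>}"]
        continuous_on_subset[OF cxi1, of "{0..\<tau>}"] continuous_on_subset[OF cxi2, of "{0..\<tau>}"]
      by (auto intro!: continuous_intros bounded_linear.continuous_on[OF matrix_vector_mul_bounded_linear])
    have cont_d: "continuous_on {0..\<tau>} (\<lambda>t. xi1 t - xi2 t)"
      using continuous_on_subset[OF cxi1, of "{0..\<tau>}"] continuous_on_subset[OF cxi2, of "{0..\<tau>}"]
      by (auto intro!: continuous_intros)
    have i1: "(\<lambda>t. (norm (obs_out C D K G (xh1 t) (xi1 t) - obs_out C D K G (xh2 t) (xi2 t)))\<^sup>2) integrable_on {0..\<tau>}"
      by (rule integrable_continuous_interval) (auto intro!: continuous_intros cont_out)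
    have i2: "(\<lambda>t. (norm (xi1 t - xi2 t))\<^sup>2) integrable_on {0..\<tau>}"
      by (rule integrable_continuous_interval) (auto intro!: continuous_intros cont_d)
    have ig: "(g has_integral (trunc_L2 (\<lambda>t. obs_out C D K G (xh1 t) (xi1 t) - obs_out C D K G (xh2 t) (xi2 t)) \<tau>
          - \<beta> * trunc_L2 (\<lambda>t. xi1 t - xi2 t) \<tau>)) {0..\<tau>}"
      unfolding g_def trunc_L2_def
      by (intro has_integral_diff has_integral_mult_right integrable_integral i1 i2)
    have "0 \<le> (W \<tau> - W 0) + (trunc_L2 (\<lambda>t. obs_out C D K G (xh1 t) (xi1 t) - obs_out C D K G (xh2 t) (xi2 t)) \<tau>
          - \<beta> * trunc_L2 (\<lambda>t. xi1 t - xi2 t) \<tau>)"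
      using has_integral_nonneg[OF has_integral_add[OF intW ig]] pw by auto
    moreover have "W \<tau> \<le> 0" unfolding W_def by (rule Qneg)
    moreover have "W 0 \<ge> - \<alpha> (norm (xh1 0 - xh2 0))" unfolding W_def \<alpha>_def e_def by (rule Qlow)
    ultimately show "\<beta> * trunc_L2 (\<lambda>t. xi1 t - xi2 t) \<tau> - \<alpha> (norm (xh1 0 - xh2 0))
        \<le> trunc_L2 (\<lambda>t. obs_out C D K G (xh1 t) (xi1 t) - obs_out C D K G (xh2 t) (xi2 t)) \<tau>"
      by linarith
  qed
  then show ?thesis
    unfolding lower_incr_L2_gain_def by (rule Sup_upper[OF imageI])
qed
end
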